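(* Let $k\ge3$ and let $u\in I_k$ be a renewed vertex. Then for every $n\ge1$ and every $v\in I^u_n$: (i) $\sigma(v)\subseteq\tilde I^u_n$; (ii) $\alpha_i(v)\subseteq I^u_{n-i}$ for each $0\le i\le n$. Moreover, $I^u_n\subseteq\mathcal U^u_n$ for every $n\ge0$, and for every $m\ge k$, every $v\in V^u_{m-k}$ and every $v'\in V_m\setminus V^u_{m-k}$, any path in $G_m$ from $v$ to $v'$ passes through $u$.
   Context: Ulam–Harris labels: $\mathcal U_n=\mathbb N^n$ ($n\ge0$, $\mathcal U_0=\{\emptyset\}$), $\mathcal U=\bigcup_{n\ge0}\mathcal U_n$; for $u=u_1\dots u_k$, $v=v_1\dots v_l$ write $uv=u_1\dots u_kv_1\dots v_l$. Fix $p>-1$, $q\in[0,1]$, and let $(\xi_u)_{u\in\mathcal U}$ be i.i.d. Poisson with mean $1+p$, and $(\delta_{u,v})_{u,v\in\mathcal U}$, $(\mu_{\{u,v\}})_{u\ne v\in\mathcal U}$ i.i.d. Bernoulli with mean $q$, all independent. The process $\mathcal G(p,q)=(G_n)_{n\ge0}$, $G_n=(V_n,E_n)$: $G_0=(\{\emptyset\},\emptyset)$, and $I_m=V_m\cap\mathcal U_m$. Given $G_{n-1}$ ($n\ge1$): (1) for $u\in I_{n-1}$ let $\mathcal K_u=\{v\in V_{n-1}:d_{G_{n-1}}(u,v)=3\}$ and $\mathcal C_u=\{j\in\mathbb N:j\le\xi_u,\ \delta_{v,uj}=0\ \forall v\in\mathcal K_u\}$; let $\tilde G_n$ have vertex set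 $V_{n-1}\cup\{ui:u\in I_{n-1},i\in\mathcal C_u\}$ and edge set $E_{n-1}\cup\{\{u,ui\}:u\in I_{n-1},i\in\mathcal C_u\}$, and $\tilde I_n$ its set of vertices in $\mathcal U_n$. (2) For $u,v\in\tilde I_n$ write $u\overset{m}{\sim}v$ iff $d_{\tilde G_n}(u,v)=4$ and $\mu_{\{u,v\}}=1$; let $\sim$ be the equivalence relation on $\tilde I_n$ generated by $\overset m\sim$, and $\pi(u)$ the lexicographically smallest element of the class of $u$. Then $V_n=V_{n-1}\cup\{\pi(u):u\in\tilde I_n\}$, $E_n=E_{n-1}\cup\{\{v,\pi(vi)\}:v\in I_{n-1},i\in\mathcal C_v\}$. Notation: for $w\in I_n$, $\alpha(w)=\bigcup_{0\le j\le n}\{x\in I_{n-j}:d_{G_n}(x,w)=j\}$ and $\alpha_i(w)=\alpha(w)\cap I_{n-i}$ for $i\le n$. For $v\in I_n$, $\sigma(v)=\{\tilde v\in\tilde I_n:\tilde v\sim v\}$. A vertex $v\in I_n$ ($n\ge3$) is renewed if exactly three vertices $w\in V_n$ satisfy $1\le d_{G_n}(v,w)\le3$. For $u\in I_k$ and $n\ge0$: $I^u_n=\{v\in I_{k+n}:u\in\alpha(v)\}$, $V^u_n=\bigcup_{j\le n}I^u_j$, $\mathcal U^u_n=\{uv:v\in\mathcal U_n\}$, and for $n\ge1$, $\tilde I^u_n=\{wi:w\in I^u_{n-1},\ wi\in\tilde I_{k+n}\}$. *)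

theory Defs
  imports Main "HOL-Library.Extended_Nat" "HOL-Library.List_Lexorder"
begin

text \<open>Ulam-Harris labels are lists of positive naturals; a graph is a pair
 (vertex set, edge set), edges being two-element sets.
 A realization of the randomness is given by
   xi :: label => nat             (the Poisson variables xi_u),
   de :: label => label => bool   (the Bernoulli variables delta_{u,v}),
   mu :: label set => bool        (the Bernoulli variables mu_{u,v}, indexed by unordered pairs).\<close>

type_synonym label = "nat list"
type_synonym graph = "label set \<times> label set set"

definition ulam :: "nat \<Rightarrow> label set" where
  "ulam n = {v. length v = n \<and> (\<forall>x\<in>set v. 1 \<le> x)}"

definition walk :: "graph \<Rightarrow> label list \<Rightarrow> bool" where
  "walk G xs \<longleftrightarrow> xs \<noteq> [] \<and> set xs \<subseteq> fst G \<and>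
     (\<forall>i. Suc i < length xs \<longrightarrow> {xs ! i, xs ! Suc i} \<in> snd G)"

definition gpath :: "graph \<Rightarrow> label list \<Rightarrow> bool" where
  "gpath G xs \<longleftrightarrow> walk G xs \<and> distinct xs"

text \<open>Graph distance (infinite if no path).\<close>
definition gdist :: "graph \<Rightarrow> label \<Rightarrow> label \<Rightarrow> enat" where
  "gdist G a b = (INF xs \<in> {xs. walk G xs \<and> hd xs = a \<and> last xs = b}. enat (length xs - 1))"

definition lvl :: "graph \<Rightarrow> nat \<Rightarrow> label set" where
  "lvl G m = {u \<in> fst G. u \<in> ulam m}"

definition Kset :: "graph \<Rightarrow> label \<Rightarrow> label set" where
  "Kset G u = {v \<in> fst G. gdist G u v = 3}"

definition Cset :: "(label \<Rightarrow> nat) \<Rightarrow> (label \<Rightarrow> label \<Rightarrow> bool) \<Rightarrow> graph \<Rightarrow> label \<Rightarrow> nat set" where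
  "Cset xi de G u = {j. 1 \<le> j \<and> j \<le> xi u \<and> (\<forall>v\<in>Kset G u. \<not> de v (u @ [j]))}"

definition tG :: "(label \<Rightarrow> nat) \<Rightarrow> (label \<Rightarrow> label \<Rightarrow> bool) \<Rightarrow> graph \<Rightarrow> nat \<Rightarrow> graph" where
  "tG xi de G m =
     (fst G \<union> {u @ [i] | u i. u \<in> lvl G m \<and> i \<in> Cset xi de G u},
      snd G \<union> {{u, u @ [i]} | u i. u \<in> lvl G m \<and> i \<in> Cset xi de G u})"

definition tI :: "(label \<Rightarrow> nat) \<Rightarrow> (label \<Rightarrow> label \<Rightarrow> bool) \<Rightarrow> graph \<Rightarrow> nat \<Rightarrow> label set" where
  "tI xi de G m = lvl (tG xi de G m) (Suc m)"

definition msim :: "(label \<Rightarrow> nat) \<Rightarrow> (label \<Rightarrow> label \<Rightarrow> bool) \<Rightarrow> (label set \<Rightarrow> bool)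
    \<Rightarrow> graph \<Rightarrow> nat \<Rightarrow> label \<Rightarrow> label \<Rightarrow> bool" where
  "msim xi de mu G m a b \<longleftrightarrow> a \<in> tI xi de G m \<and> b \<in> tI xi de G m \<and>
     gdist (tG xi de G m) a b = 4 \<and> mu {a, b}"

definition simrel :: "(label \<Rightarrow> nat) \<Rightarrow> (label \<Rightarrow> label \<Rightarrow> bool) \<Rightarrow> (label set \<Rightarrow> bool)
    \<Rightarrow> graph \<Rightarrow> nat \<Rightarrow> label \<Rightarrow> label \<Rightarrow> bool" where
  "simrel xi de mu G m a b \<longleftrightarrow> a \<in> tI xi de G m \<and> b \<in> tI xi de G m \<and>
     (\<lambda>x y. msim xi de mu G m x y \<or> msim xi de mu G m y x)\<^sup>*\<^sup>* a b"

definition piF :: "(label \<Rightarrow> nat) \<Rightarrow> (label \<Rightarrow> label \<Rightarrow> bool) \<Rightarrow> (label set \<Rightarrow> bool)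
    \<Rightarrow> graph \<Rightarrow> nat \<Rightarrow> label \<Rightarrow> label" where
  "piF xi de mu G m a = Min {b. simrel xi de mu G m a b}"

definition step :: "(label \<Rightarrow> nat) \<Rightarrow> (label \<Rightarrow> label \<Rightarrow> bool) \<Rightarrow> (label set \<Rightarrow> bool)
    \<Rightarrow> nat \<Rightarrow> graph \<Rightarrow> graph" where
  "step xi de mu m G =
     (fst G \<union> piF xi de mu G m ` tI xi de G m,
      snd G \<union> {{v, piF xi de mu G m (v @ [i])} | v i. v \<in> lvl G m \<and> i \<in> Cset xi de G v})"

primrec GG :: "(label \<Rightarrow> nat) \<Rightarrow> (label \<Rightarrow> label \<Rightarrow> bool) \<Rightarrow> (label set \<Rightarrow> bool) \<Rightarrow> nat \<Rightarrow> graph" where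
  "GG xi de mu 0 = ({[]}, {})"
| "GG xi de mu (Suc m) = step xi de mu m (GG xi de mu m)"

text \<open>Stage-level notions.  V n, E n, I n refer to G_n; tildeI n and simn n
  (for n >= 1) are tilde I_n and the relation ~ on it.\<close>

definition Vn where "Vn xi de mu n = fst (GG xi de mu n)"
definition In where "In xi de mu n = lvl (GG xi de mu n) n"
definition tildeI where "tildeI xi de mu n = tI xi de (GG xi de mu (n - 1)) (n - 1)"
definition simn where "simn xi de mu n = simrel xi de mu (GG xi de mu (n - 1)) (n - 1)"

definition alpha :: "(label \<Rightarrow> nat) \<Rightarrow> (label \<Rightarrow> label \<Rightarrow> bool) \<Rightarrow> (label set \<Rightarrow> bool)
    \<Rightarrow> nat \<Rightarrow> label \<Rightarrow> label set" where
  "alpha xi de mu n w =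
     (\<Union>j\<in>{0..n}. {x \<in> In xi de mu (n - j). gdist (GG xi de mu n) x w = enat j})"

definition alpha_i where
  "alpha_i xi de mu n i w = alpha xi de mu n w \<inter> In xi de mu (n - i)"

definition sigma where
  "sigma xi de mu n v = {vt \<in> tildeI xi de mu n. simn xi de mu n vt v}"

definition renewed where
  "renewed xi de mu n v \<longleftrightarrow> 3 \<le> n \<and> v \<in> In xi de mu n \<and>
     card {w \<in> Vn xi de mu n. 1 \<le> gdist (GG xi de mu n) v w \<and> gdist (GG xi de mu n) v w \<le> 3} = 3"

definition Iu where
  "Iu xi de mu k u n = {v \<in> In xi de mu (k + n). u \<in> alpha xi de mu (k + n) v}"

definition Vu where
  "Vu xi de mu k u n = (\<Union>j\<in>{0..n}. Iu xi de mu k u j)"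

definition Uu :: "label \<Rightarrow> nat \<Rightarrow> label set" where
  "Uu u n = {u @ v | v. v \<in> ulam n}"

definition tIu where
  "tIu xi de mu k u n = {w @ [i] | w i. w \<in> Iu xi de mu k u (n - 1) \<and> w @ [i] \<in> tildeI xi de mu (k + n)}"

end

theory Submission
  imports Defs
begin


lemma walk_single: "walk G [x] \<longleftrightarrow> x \<in> fst G" by (simp add: walk_def)

lemma walk_Cons2: "walk G (x#y#zs) \<longleftrightarrow> x \<in> fst G \<and> {x,y} \<in> snd G \<and> walk G (y#zs)"
proof
  assume "walk G (x#y#zs)"
  then show "x \<in> fst G \<and> {x,y} \<in> snd G \<and> walk G (y#zs)"
    unfolding walk_def
  proof (elim conjE, intro conjI allI impI)
    assume h: "\<forall>i. Suc i < length (x#y#zs) \<longrightarrow> {(x#y#zs) ! i, (x#y#zs) ! Suc i} \<in> snd G"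
    show "{x,y} \<in> snd G" using h[rule_format, of 0] by simp
    fix i assume "Suc i < length (y#zs)"
    then show "{(y#zs) ! i, (y#zs) ! Suc i} \<in> snd G" using h[rule_format, of "Suc i"] by simp
  qed auto
next
  assume a: "x \<in> fst G \<and> {x,y} \<in> snd G \<and> walk G (y#zs)"
  show "walk G (x#y#zs)" unfolding walk_def
  proof (intro conjI allI impI)
    fix i assume "Suc i < length (x#y#zs)"
    then show "{(x#y#zs) ! i, (x#y#zs) ! Suc i} \<in> snd G" using a unfolding walk_def
      by (cases i) auto
  qed (use a in \<open>auto simp: walk_def\<close>)
qed



lemma tG_fst: "fst (tG xi de G m) = fst G \<union> {v@[i] | v i. v \<in> lvl G m \<and> i \<in> Cset xi de G v}"
  by (simp add: tG_def)
lemma tG_snd: "snd (tG xi de G m) = snd G \<union> {{v, v@[i]} | v i. v \<in> lvl G m \<and> i \<in> Cset xi de G v}"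
  by (simp add: tG_def)

lemma fin_tG: assumes "finite (fst G)" shows "finite (fst (tG xi de G m))"
proof -
  have "{v@[i] | v i. v \<in> lvl G m \<and> i \<in> Cset xi de G v} \<subseteq> (\<Union>v\<in>fst G. (\<lambda>i. v@[i]) ` {..xi v})"
    by (auto simp: lvl_def Cset_def)
  moreover have "finite (\<Union>v\<in>fst G. (\<lambda>i. v@[i]) ` {..xi v})" using assms by auto
  ultimately show ?thesis unfolding tG_fst using assms by (meson finite_Un finite_subset)
qed

lemma fin_tI: "finite (fst G) \<Longrightarrow> finite (tI xi de G m)"
  unfolding tI_def lvl_def using fin_tG by (metis (no_types, lifting) finite_subset mem_Collect_eq subsetI)

lemma piF_in: assumes "finite (fst G)" "a \<in> tI xi de G m"
  shows "piF xi de mu G m a \<in> tI xi de G m \<and> simrel xi de mu G m a (piF xi de mu G m a)"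
proof -
  let ?B = "{b. simrel xi de mu G m a b}"
  have sub: "?B \<subseteq> tI xi de G m" by (auto simp: simrel_def)
  have fin: "finite ?B" using fin_tI[OF assms(1)] sub finite_subset by blast
  have "a \<in> ?B" using assms(2) by (simp add: simrel_def)
  then have "Min ?B \<in> ?B" using fin Min_in by blast
  then show ?thesis using sub unfolding piF_def by auto
qed

lemma tI_dec: assumes "a \<in> tI xi de G m" "\<forall>x\<in>fst G. length x \<le> m"
  shows "a \<in> ulam (Suc m) \<and> (\<exists>v i. a = v@[i] \<and> v \<in> lvl G m \<and> i \<in> Cset xi de G v)"
proof -
  have a: "a \<in> fst (tG xi de G m)" "a \<in> ulam (Suc m)" using assms(1) by (auto simp: tI_def lvl_def)
  have "a \<notin> fst G" using a(2) assms(2) by (auto simp: ulam_def)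
  then show ?thesis using a unfolding tG_fst by auto
qed

lemma ulam_len: "x \<in> ulam n \<Longrightarrow> length x = n" by (simp add: ulam_def)

lemma step_fst: "fst (step xi de mu m G) = fst G \<union> piF xi de mu G m ` tI xi de G m"
  by (simp add: step_def)
lemma step_snd: "snd (step xi de mu m G) = snd G \<union> {{v, piF xi de mu G m (v @ [i])} | v i. v \<in> lvl G m \<and> i \<in> Cset xi de G v}"
  by (simp add: step_def)

lemma GG_basic: "finite (fst (GG xi de mu m)) \<and> (\<forall>x\<in>fst (GG xi de mu m). x \<in> ulam (length x) \<and> length x \<le> m)"
proof (induction m)
  case 0
  then show ?case by (simp add: ulam_def)
next
  case (Suc m)
  let ?G = "GG xi de mu m"
  have fin: "finite (fst (GG xi de mu (Suc m)))"
    using Suc fin_tI[of ?G] by (simp add: step_fst)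
  have "\<forall>x\<in>fst (GG xi de mu (Suc m)). x \<in> ulam (length x) \<and> length x \<le> Suc m"
  proof
    fix x assume "x \<in> fst (GG xi de mu (Suc m))"
    then consider "x \<in> fst ?G" | a where "a \<in> tI xi de ?G m" "x = piF xi de mu ?G m a"
      by (auto simp: step_fst)
    then show "x \<in> ulam (length x) \<and> length x \<le> Suc m"
    proof cases
      case 1 then show ?thesis using Suc by auto
    next
      case 2
      have "x \<in> tI xi de ?G m" using piF_in[OF _ 2(1)] Suc 2(2) by auto
      then have "x \<in> ulam (Suc m)" by (simp add: tI_def lvl_def)
      then show ?thesis by (simp add: ulam_len)
    qed
  qed
  then show ?case using fin by blast
qed

lemma GG_fin: "finite (fst (GG xi de mu m))" using GG_basic by blast
lemma GG_lev: "x \<in> fst (GG xi de mu m) \<Longrightarrow> x \<in> ulam (length x) \<and> length x \<le> m" using GG_basic by blast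

lemma new_vert: "x \<in> fst (GG xi de mu (Suc m)) \<Longrightarrow> x \<notin> fst (GG xi de mu m) \<Longrightarrow>
   \<exists>v i. v \<in> lvl (GG xi de mu m) m \<and> i \<in> Cset xi de (GG xi de mu m) v \<and> x = piF xi de mu (GG xi de mu m) m (v@[i]) \<and> length x = Suc m"
proof -
  assume x: "x \<in> fst (GG xi de mu (Suc m))" "x \<notin> fst (GG xi de mu m)"
  let ?G = "GG xi de mu m"
  obtain a where a: "a \<in> tI xi de ?G m" "x = piF xi de mu ?G m a" using x by (auto simp: step_fst)
  have "x \<in> tI xi de ?G m" using piF_in[OF GG_fin a(1)] a(2) by auto
  then have lx: "length x = Suc m" by (simp add: tI_def lvl_def ulam_def)
  obtain v i where "a = v@[i]" "v \<in> lvl ?G m" "i \<in> Cset xi de ?G v"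
    using tI_dec[OF a(1)] GG_lev by blast
  then show ?thesis using a lx by blast
qed

lemma GG_mono1: "fst (GG xi de mu m) \<subseteq> fst (GG xi de mu (Suc m)) \<and> snd (GG xi de mu m) \<subseteq> snd (GG xi de mu (Suc m))"
  by (simp add: step_fst step_snd)

lemma GG_mono: "l \<le> m \<Longrightarrow> fst (GG xi de mu l) \<subseteq> fst (GG xi de mu m) \<and> snd (GG xi de mu l) \<subseteq> snd (GG xi de mu m)"
proof (induction m)
  case 0 then show ?case by simp
next
  case (Suc m)
  then show ?case using GG_mono1[of xi de mu m] by (cases "l = Suc m") auto
qed

lemma GG_stab: "x \<in> fst (GG xi de mu m) \<Longrightarrow> x \<in> fst (GG xi de mu (length x))"
proof (induction m)
  case 0 then show ?case by simp
next
  case (Suc m)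
  then show ?case using new_vert[of x xi de mu m] by metis
qed

lemma GG_edge: "e \<in> snd (GG xi de mu m) \<Longrightarrow> \<exists>v w. e = {v,w} \<and> v \<in> fst (GG xi de mu m) \<and> w \<in> fst (GG xi de mu m) \<and> length w = Suc (length v)"
proof (induction m arbitrary: e)
  case 0 then show ?case by simp
next
  case (Suc m)
  let ?G = "GG xi de mu m"
  from Suc.prems consider "e \<in> snd ?G" | v i where "v \<in> lvl ?G m" "i \<in> Cset xi de ?G v" "e = {v, piF xi de mu ?G m (v@[i])}"
    by (auto simp: step_snd)
  then show ?case
  proof cases
    case 1 then show ?thesis using Suc.IH GG_mono1[of xi de mu m] by blast
  next
    case 2
    have t: "v@[i] \<in> tI xi de ?G m" using 2 by (auto simp: tI_def lvl_def tG_fst ulam_def Cset_def)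
    have "piF xi de mu ?G m (v@[i]) \<in> tI xi de ?G m" using piF_in[OF GG_fin t] by auto
    then have "length (piF xi de mu ?G m (v@[i])) = Suc m"
      by (auto simp: tI_def lvl_def ulam_def)
    moreover have "piF xi de mu ?G m (v@[i]) \<in> fst (GG xi de mu (Suc m))"
      using t by (simp add: step_fst)
    moreover have "v \<in> fst (GG xi de mu (Suc m))" "length v = m" using 2 GG_mono1[of xi de mu m] by (auto simp: lvl_def ulam_def)
    ultimately show ?thesis using 2 by auto
  qed
qed

lemma GG_parent: "x \<in> fst (GG xi de mu m) \<Longrightarrow> 1 \<le> length x \<Longrightarrow> \<exists>y. {y,x} \<in> snd (GG xi de mu m) \<and> Suc (length y) = length x"
proof (induction m)
  case 0 then show ?case by simp
next
  case (Suc m)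
  show ?case
  proof (cases "x \<in> fst (GG xi de mu m)")
    case True then show ?thesis using Suc GG_mono1[of xi de mu m] by blast
  next
    case False
    then obtain v i where "v \<in> lvl (GG xi de mu m) m" "i \<in> Cset xi de (GG xi de mu m) v" "x = piF xi de mu (GG xi de mu m) m (v@[i])" "length x = Suc m"
      using new_vert[OF Suc.prems(1)] by blast
    then show ?thesis by (auto simp: step_snd lvl_def ulam_def)
  qed
qed



definition EdgeLev :: "graph \<Rightarrow> bool" where
  "EdgeLev G \<longleftrightarrow> (\<forall>a b. {a,b} \<in> snd G \<longrightarrow> length b = Suc (length a) \<or> length a = Suc (length b))"

lemma EdgeLev_GG: "EdgeLev (GG xi de mu m)"
  unfolding EdgeLev_def
proof (intro allI impI)
  fix a b assume "{a,b} \<in> snd (GG xi de mu m)"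
  from GG_edge[OF this] obtain v w where "{a,b} = {v,w}" "length w = Suc (length v)" by auto
  then show "length b = Suc (length a) \<or> length a = Suc (length b)" by (auto simp: doubleton_eq_iff)
qed

lemma EdgeLev_tG: assumes "EdgeLev G" "\<forall>x\<in>fst G. length x \<le> m" shows "EdgeLev (tG xi de G m)"
  unfolding EdgeLev_def
proof (intro allI impI)
  fix a b assume "{a,b} \<in> snd (tG xi de G m)"
  then have "{a,b} \<in> snd G \<or> (\<exists>v i. {a,b} = {v, v@[i]})" unfolding tG_snd by auto
  then show "length b = Suc (length a) \<or> length a = Suc (length b)"
    using assms(1) unfolding EdgeLev_def by (auto simp: doubleton_eq_iff)
qed

lemma walk_lev1: assumes "walk G xs" "EdgeLev G" "Suc i < length xs"
  shows "\<bar>int (length (xs!i)) - int (length (xs!Suc i))\<bar> = 1"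
proof -
  have "{xs!i, xs!Suc i} \<in> snd G" using assms(1,3) by (simp add: walk_def)
  then have "length (xs!Suc i) = Suc (length (xs!i)) \<or> length (xs!i) = Suc (length (xs!Suc i))"
    using assms(2) unfolding EdgeLev_def by simp
  then show ?thesis by auto
qed

lemma walk_lev2: assumes "walk G xs" "EdgeLev G" "i + d < length xs"
  shows "\<bar>int (length (xs!i)) - int (length (xs!(i+d)))\<bar> \<le> int d"
  using assms(3)
proof (induction d)
  case 0 then show ?case by simp
next
  case (Suc d)
  have "\<bar>int (length (xs!i)) - int (length (xs!(i+d)))\<bar> \<le> int d" using Suc by simp
  moreover have "\<bar>int (length (xs!(i+d))) - int (length (xs!Suc (i+d)))\<bar> = 1"
    using walk_lev1[OF assms(1,2)] Suc.prems by simp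
  ultimately show ?case by simp
qed

lemma walk_lev: assumes "walk G xs" "EdgeLev G" "i < length xs" "j < length xs"
  shows "\<bar>int (length (xs!i)) - int (length (xs!j))\<bar> \<le> \<bar>int i - int j\<bar>"
proof (cases "i \<le> j")
  case True
  then show ?thesis using walk_lev2[OF assms(1,2), of i "j - i"] assms by simp
next
  case False
  then show ?thesis using walk_lev2[OF assms(1,2), of j "i - j"] assms by simp
qed

lemma gdist_le: "walk G xs \<Longrightarrow> hd xs = a \<Longrightarrow> last xs = b \<Longrightarrow> gdist G a b \<le> enat (length xs - 1)"
  unfolding gdist_def by (rule INF_lower) auto

lemma gdist_ge: "(\<And>xs. walk G xs \<Longrightarrow> hd xs = a \<Longrightarrow> last xs = b \<Longrightarrow> c \<le> enat (length xs - 1)) \<Longrightarrow> c \<le> gdist G a b"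
  unfolding gdist_def by (rule INF_greatest) auto

lemma gdist_ex: assumes "gdist G a b = enat j"
  shows "\<exists>xs. walk G xs \<and> hd xs = a \<and> last xs = b \<and> length xs = Suc j"
proof -
  let ?S = "{xs. walk G xs \<and> hd xs = a \<and> last xs = b}"
  let ?f = "\<lambda>xs. enat (length xs - 1)"
  have ne: "?f ` ?S \<noteq> {}"
  proof
    assume "?f ` ?S = {}"
    then have "gdist G a b = \<infinity>" unfolding gdist_def by (simp add: Inf_enat_def)
    then show False using assms by simp
  qed
  have "gdist G a b = Inf (?f ` ?S)" unfolding gdist_def by simp
  also have "\<dots> = (LEAST x. x \<in> ?f ` ?S)" unfolding Inf_enat_def by (simp only: ne if_False)
  finally have "gdist G a b = (LEAST x. x \<in> ?f ` ?S)" .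
  moreover have "(LEAST x. x \<in> ?f ` ?S) \<in> ?f ` ?S"
  proof -
    obtain y where "y \<in> ?f ` ?S" using ne by blast
    then show ?thesis by (rule LeastI)
  qed
  ultimately have "enat j \<in> ?f ` ?S" using assms by simp
  then obtain xs where "xs \<in> ?S" "enat j = enat (length xs - 1)" by blast
  moreover then have "xs \<noteq> []" by (simp add: walk_def)
  ultimately show ?thesis by auto
qed

lemma gdist_lev: assumes "EdgeLev G"
  shows "enat (nat \<bar>int (length a) - int (length b)\<bar>) \<le> gdist G a b"
proof (rule gdist_ge)
  fix xs assume w: "walk G xs" "hd xs = a" "last xs = b"
  then have ne: "xs \<noteq> []" by (simp add: walk_def)
  then have "xs!0 = a" "xs!(length xs - 1) = b" using w by (auto simp: hd_conv_nth last_conv_nth)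
  then have "\<bar>int (length a) - int (length b)\<bar> \<le> \<bar>int 0 - int (length xs - 1)\<bar>"
    using walk_lev[OF w(1) assms, of 0 "length xs - 1"] ne by simp
  then show "enat (nat \<bar>int (length a) - int (length b)\<bar>) \<le> enat (length xs - 1)" by simp
qed

definition cutp :: "nat \<Rightarrow> label \<Rightarrow> label \<Rightarrow> graph \<Rightarrow> bool" where
  "cutp k u p1 G \<longleftrightarrow> (\<forall>a b. {a,b} \<in> snd G \<longrightarrow> take k a = u \<longrightarrow> take k b \<noteq> u \<longrightarrow> a = u \<and> b = p1)"

lemma crossing: "walk G xs \<Longrightarrow> cutp k u p1 G \<Longrightarrow> (take k (hd xs) = u) \<noteq> (take k (last xs) = u) \<Longrightarrow> u \<in> set xs \<and> p1 \<in> set xs"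
proof (induction xs rule: induct_list012)
  case 1 then show ?case by (simp add: walk_def)
next
  case (2 x) then show ?case by simp
next
  case (3 x y zs)
  have e: "{x,y} \<in> snd G" and w: "walk G (y#zs)" using "3.prems"(1) walk_Cons2 by auto
  show ?case
  proof (cases "(take k x = u) = (take k y = u)")
    case True
    then have "u \<in> set (y#zs) \<and> p1 \<in> set (y#zs)" using "3.IH"(2)[OF w "3.prems"(2)] "3.prems"(3) by simp
    then show ?thesis by auto
  next
    case False
    then have "(x = u \<and> y = p1) \<or> (y = u \<and> x = p1)" using e "3.prems"(2) unfolding cutp_def
      by (metis insert_commute)
    then show ?thesis by auto
  qed
qed



lemma edge_in: "{a,b} \<in> snd (GG xi de mu m) \<Longrightarrow> a \<in> fst (GG xi de mu m) \<and> b \<in> fst (GG xi de mu m)"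
proof -
  assume "{a,b} \<in> snd (GG xi de mu m)"
  from GG_edge[OF this] obtain v w where "{a,b} = {v,w}" "v \<in> fst (GG xi de mu m)" "w \<in> fst (GG xi de mu m)" by auto
  then show ?thesis by (auto simp: doubleton_eq_iff)
qed

lemma walk_snoc: assumes "walk G xs" "{last xs, x} \<in> snd G" "x \<in> fst G" shows "walk G (xs @ [x])"
  unfolding walk_def
proof (intro conjI allI impI)
  show "xs @ [x] \<noteq> []" by simp
  show "set (xs @ [x]) \<subseteq> fst G" using assms by (auto simp: walk_def)
  fix i assume i: "Suc i < length (xs @ [x])"
  show "{(xs @ [x]) ! i, (xs @ [x]) ! Suc i} \<in> snd G"
  proof (cases "Suc i < length xs")
    case True then show ?thesis using assms(1) by (auto simp: walk_def nth_append)
  next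
    case False
    then have "i = length xs - 1" "xs \<noteq> []" using i assms(1) by (auto simp: walk_def)
    then show ?thesis using assms(2) by (simp add: nth_append last_conv_nth)
  qed
qed

lemma gdist_pos: "a \<noteq> b \<Longrightarrow> 1 \<le> gdist G a b"
proof (rule gdist_ge)
  fix xs assume "a \<noteq> b" "walk G xs" "hd xs = a" "last xs = b"
  then have "length xs \<noteq> 1" "xs \<noteq> []" by (auto simp: walk_def length_Suc_conv)
  then have "length xs \<noteq> 0" "length xs \<noteq> 1" by auto
  then have "1 \<le> length xs - 1" by linarith
  then show "1 \<le> enat (length xs - 1)" by (simp add: one_enat_def)
qed

lemma cut_tG: assumes "cutp k u p1 G" "k \<le> m" shows "cutp k u p1 (tG xi de G m)"
  unfolding cutp_def
proof (intro allI impI)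
  fix a b assume e: "{a,b} \<in> snd (tG xi de G m)" and pa: "take k a = u" and pb: "take k b \<noteq> u"
  from e have "{a,b} \<in> snd G \<or> (\<exists>v i. v \<in> lvl G m \<and> {a,b} = {v, v@[i]})" unfolding tG_snd by auto
  then show "a = u \<and> b = p1"
  proof
    assume "{a,b} \<in> snd G" then show ?thesis using assms(1) pa pb unfolding cutp_def by blast
  next
    assume "\<exists>v i. v \<in> lvl G m \<and> {a,b} = {v, v@[i]}"
    then obtain v i where "v \<in> lvl G m" "{a,b} = {v, v@[i]}" by blast
    moreover then have "length v = m" by (simp add: lvl_def ulam_def)
    ultimately have "take k (v@[i]) = take k v" "{a,b} = {v, v@[i]}" using assms(2) by auto
    then show ?thesis using pa pb by (auto simp: doubleton_eq_iff)
  qed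
qed



context
  fixes xi :: "label \<Rightarrow> nat" and de :: "label \<Rightarrow> label \<Rightarrow> bool" and mu :: "label set \<Rightarrow> bool"
    and k :: nat and u p1 :: label
  assumes k3: "3 \<le> k" and uI: "u \<in> In xi de mu k" and ren: "renewed xi de mu k u"
    and p1e: "{p1,u} \<in> snd (GG xi de mu k)" and p1l: "Suc (length p1) = k"
begin

lemma u_len: "length u = k" and u_in: "u \<in> fst (GG xi de mu k)"
  using uI by (auto simp: In_def lvl_def ulam_def)

lemma p1_in: "p1 \<in> fst (GG xi de mu k)" using edge_in[OF p1e] by blast

lemma W_prop:
  assumes "w \<in> fst (GG xi de mu k)" "1 \<le> gdist (GG xi de mu k) u w" "gdist (GG xi de mu k) u w \<le> 3"
  shows "length w < k \<and> (length w = k - 1 \<longrightarrow> w = p1)"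
proof -
  let ?G = "GG xi de mu k"
  let ?W = "{w \<in> Vn xi de mu k. 1 \<le> gdist ?G u w \<and> gdist ?G u w \<le> 3}"
  have card3: "card ?W = 3" using ren by (simp add: renewed_def)
  have finW: "finite ?W" using card3 card.infinite by (metis zero_neq_numeral)
  have "1 \<le> length p1" using p1l k3 by simp
  from GG_parent[OF p1_in this] obtain p2 where p2: "{p2,p1} \<in> snd ?G" "Suc (length p2) = length p1"
    by blast
  have p2_in: "p2 \<in> fst ?G" using edge_in[OF p2(1)] by blast
  have "1 \<le> length p2" using p1l p2 k3 by simp
  from GG_parent[OF p2_in this] obtain p3 where p3: "{p3,p2} \<in> snd ?G" "Suc (length p3) = length p2"
    by blast
  have p3_in: "p3 \<in> fst ?G" using edge_in[OF p3(1)] by blast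
  have w3: "walk ?G [u,p1,p2,p3]" using u_in p1_in p2_in p3_in p1e p2 p3
    by (simp add: walk_Cons2 walk_single insert_commute)
  have w2: "walk ?G [u,p1,p2]" using u_in p1_in p2_in p1e p2
    by (simp add: walk_Cons2 walk_single insert_commute)
  have w1: "walk ?G [u,p1]" using u_in p1_in p1e
    by (simp add: walk_Cons2 walk_single insert_commute)
  have l3: "gdist ?G u p3 \<le> enat 3" using gdist_le[of ?G "[u,p1,p2,p3]" u "p3"] w3 by (simp add: eval_nat_numeral)
  have l2: "gdist ?G u p2 \<le> enat 2" using gdist_le[of ?G "[u,p1,p2]" u "p2"] w2 by (simp add: eval_nat_numeral)
  have l1: "gdist ?G u p1 \<le> enat 1" using gdist_le[of ?G "[u,p1]" u "p1"] w1 by (simp add: eval_nat_numeral)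
  have e3: "(3::enat) = enat 3" by (simp add: numeral_eq_enat)
  have "enat 2 \<le> enat 3" "enat 1 \<le> enat 3" by simp_all
  then have le3: "gdist ?G u p3 \<le> 3" "gdist ?G u p2 \<le> 3" "gdist ?G u p1 \<le> 3"
    using l1 l2 l3 unfolding e3 by (meson order.trans)+
  have ne: "u \<noteq> p1" "u \<noteq> p2" "u \<noteq> p3" using u_len p1l p2 p3 by auto
  have sub: "{p1,p2,p3} \<subseteq> ?W"
    using le3 gdist_pos[OF ne(1)] gdist_pos[OF ne(2)] gdist_pos[OF ne(3)]
      p1_in p2_in p3_in by (simp add: Vn_def)
  have "p1 \<noteq> p2" "p1 \<noteq> p3" "p2 \<noteq> p3" using p2(2) p3(2) by auto
  then have "card {p1,p2,p3} = 3" by simp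
  then have Weq: "{p1,p2,p3} = ?W" using card_subset_eq[OF finW sub] card3 by simp
  have "w \<in> ?W" using assms by (simp add: Vn_def)
  then have "w = p1 \<or> w = p2 \<or> w = p3" using Weq by blast
  then show ?thesis using p1l p2 p3 k3 by auto
qed

lemma R1: assumes "{u,y} \<in> snd (GG xi de mu k)" shows "y = p1"
proof -
  let ?G = "GG xi de mu k"
  have y_in: "y \<in> fst ?G" using edge_in[OF assms] by blast
  have lv: "length y = Suc k \<or> k = Suc (length y)" using EdgeLev_GG[of xi de mu k] assms u_len
    unfolding EdgeLev_def by metis
  have "length y \<le> k" using GG_lev[OF y_in] by simp
  then have ly: "length y = k - 1" using lv by auto
  then have ne: "u \<noteq> y" using u_len k3 by auto
  have w: "walk ?G [u,y]" using u_in y_in assms by (simp add: walk_Cons2 walk_single)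
  have "gdist ?G u y \<le> enat 1" using gdist_le[of ?G "[u,y]" u y] w by simp
  moreover have "enat 1 \<le> 3" by (simp add: numeral_eq_enat)
  ultimately have "gdist ?G u y \<le> 3" by (rule order.trans)
  then show ?thesis using W_prop[OF y_in gdist_pos[OF ne]] ly by blast
qed

lemma R2: assumes "c \<in> fst (GG xi de mu k)" "{c,p1} \<in> snd (GG xi de mu k)" "length c = k" shows "c = u"
proof (rule ccontr)
  assume ne: "c \<noteq> u"
  let ?G = "GG xi de mu k"
  have w: "walk ?G [u,p1,c]" using u_in p1_in assms p1e by (simp add: walk_Cons2 walk_single insert_commute)
  have "gdist ?G u c \<le> enat 2" using gdist_le[of ?G "[u,p1,c]" u c] w by (simp add: eval_nat_numeral)
  moreover have "enat 2 \<le> 3" by (simp add: numeral_eq_enat)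
  ultimately have "gdist ?G u c \<le> 3" by (rule order.trans)
  then show False using W_prop[OF assms(1) gdist_pos] ne assms(3) by auto
qed

lemma cut0: "cutp k u p1 (GG xi de mu k)"
  unfolding cutp_def
proof (intro allI impI)
  fix a b assume e: "{a,b} \<in> snd (GG xi de mu k)" and pa: "take k a = u" and pb: "take k b \<noteq> u"
  have "a \<in> fst (GG xi de mu k)" using edge_in[OF e] by blast
  then have "length a \<le> k" using GG_lev by blast
  then have "a = u" using pa by simp
  then show "a = u \<and> b = p1" using R1 e by blast
qed

lemma msimP: assumes "k \<le> m" "cutp k u p1 (GG xi de mu m)" "x \<in> tI xi de (GG xi de mu m) m" "y \<in> tI xi de (GG xi de mu m) m"
  "gdist (tG xi de (GG xi de mu m) m) x y = 4"
  shows "(take k x = u) = (take k y = u)"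
proof (rule ccontr)
  assume dif: "(take k x = u) \<noteq> (take k y = u)"
  let ?G = "GG xi de mu m"
  let ?T = "tG xi de ?G m"
  have lvG: "\<forall>z\<in>fst ?G. length z \<le> m" using GG_lev by blast
  have ET: "EdgeLev ?T" using EdgeLev_tG[OF EdgeLev_GG lvG] .
  have CT: "cutp k u p1 ?T" using cut_tG[OF assms(2,1)] .
  have "gdist ?T x y = enat 4" using assms(5) by (simp add: numeral_eq_enat)
  from gdist_ex[OF this] obtain xs where xs: "walk ?T xs" "hd xs = x" "last xs = y" "length xs = 5" by auto
  have xne: "xs \<noteq> []" using xs(4) by auto
  have x0: "xs!0 = x" using xs(2) hd_conv_nth[OF xne] by simp
  have y4: "xs!4 = y" using xs(3,4) last_conv_nth[OF xne] by simp
  have lx: "length x = Suc m" "length y = Suc m" using assms(3,4) by (auto simp: tI_def lvl_def ulam_def)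
  have "p1 \<in> set xs" using crossing[OF xs(1) CT] xs(2,3) dif by blast
  then obtain t where t: "t < 5" "xs!t = p1" using xs(4) by (auto simp: in_set_conv_nth)
  have a1: "\<bar>int (length (xs!0)) - int (length (xs!t))\<bar> \<le> \<bar>int 0 - int t\<bar>" using walk_lev[OF xs(1) ET, of 0 t] t xs(4) by simp
  have a2: "\<bar>int (length (xs!4)) - int (length (xs!t))\<bar> \<le> \<bar>int 4 - int t\<bar>" using walk_lev[OF xs(1) ET, of 4 t] t xs(4) by simp
  have mk: "m = k" and t2: "t = 2" using a1 a2 x0 y4 lx t p1l assms(1) by auto
  have b1: "\<bar>int (length (xs!0)) - int (length (xs!1))\<bar> \<le> 1" using walk_lev[OF xs(1) ET, of 0 1] xs(4) by simp
  have b2: "\<bar>int (length (xs!1)) - int (length (xs!2))\<bar> \<le> 1" using walk_lev[OF xs(1) ET, of 1 2] xs(4) by simp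
  have b3: "\<bar>int (length (xs!3)) - int (length (xs!2))\<bar> \<le> 1" using walk_lev[OF xs(1) ET, of 3 2] xs(4) by simp
  have b4: "\<bar>int (length (xs!4)) - int (length (xs!3))\<bar> \<le> 1" using walk_lev[OF xs(1) ET, of 4 3] xs(4) by simp
  have L1: "length (xs!1) = k" and L3: "length (xs!3) = k" using b1 b2 b3 b4 x0 y4 lx t t2 mk p1l by auto
  have xsT: "set xs \<subseteq> fst ?T" using xs(1) by (simp add: walk_def)
  have eT: "\<And>i. Suc i < 5 \<Longrightarrow> {xs!i, xs!Suc i} \<in> snd ?T" using xs(1,4) by (simp add: walk_def)
  have isu: "xs!i = u" if i: "i = 1 \<or> i = 3" for i
  proof -
    have li: "length (xs!i) = k" using i L1 L3 by auto
    have "xs!i \<in> set xs" using i xs(4) by auto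
    then have "xs!i \<in> fst ?T" using xsT by blast
    have "xs!i \<in> fst ?G"
    proof (rule ccontr)
      assume "xs!i \<notin> fst ?G"
      then obtain v j where "xs!i = v@[j]" "v \<in> lvl ?G m" using \<open>xs!i \<in> fst ?T\<close> unfolding tG_fst by blast
      then have "length (xs!i) = Suc m" by (simp add: lvl_def ulam_def)
      then show False using li mk by simp
    qed
    then have inG: "xs!i \<in> fst (GG xi de mu k)" using mk by simp
    have "{xs!1, xs!2} \<in> snd ?T" using eT[of 1] by (simp add: eval_nat_numeral)
    moreover have "{xs!2, xs!3} \<in> snd ?T" using eT[of 2] by (simp add: eval_nat_numeral)
    ultimately have "{xs!i, p1} \<in> snd ?T" using i t t2
    proof -
      assume h: "{xs!1, xs!2} \<in> snd ?T" "{xs!2, xs!3} \<in> snd ?T"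
      have p: "xs!2 = p1" using t t2 by simp
      have "{xs!3, p1} = {p1, xs!3}" by (rule insert_commute)
      then show ?thesis using i h p by (elim disjE) simp_all
    qed
    then have "{xs!i, p1} \<in> snd ?G \<or> (\<exists>v j. v \<in> lvl ?G m \<and> {xs!i, p1} = {v, v@[j]})"
      unfolding tG_snd by blast
    moreover have False if "v \<in> lvl ?G m" "{xs!i, p1} = {v, v@[j]}" for v j
    proof -
      have "length v = m" using that(1) by (simp add: lvl_def ulam_def)
      moreover have "(xs!i = v \<and> p1 = v@[j]) \<or> (xs!i = v@[j] \<and> p1 = v)" using that(2) by (simp add: doubleton_eq_iff)
      ultimately show False using li p1l mk by auto
    qed
    ultimately have "{xs!i, p1} \<in> snd ?G" by blast
    then have "{xs!i, p1} \<in> snd (GG xi de mu k)" using mk by simp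
    then show ?thesis using R2 inG li by blast
  qed
  have "{xs!0, xs!1} \<in> snd ?T" using eT[of 0] by (simp add: eval_nat_numeral)
  moreover have "{xs!3, xs!4} \<in> snd ?T" using eT[of 3] by (simp add: eval_nat_numeral)
  ultimately have ex: "{u, x} \<in> snd ?T" "{u, y} \<in> snd ?T"
  proof -
    assume h: "{xs!0, xs!1} \<in> snd ?T" "{xs!3, xs!4} \<in> snd ?T"
    have "xs!1 = u" "xs!3 = u" using isu by auto
    moreover have "{x, u} = {u, x}" by (rule insert_commute)
    ultimately show "{u, x} \<in> snd ?T" "{u, y} \<in> snd ?T" using h x0 y4 by simp_all
  qed
  have "take k u = u" using u_len by simp
  have cc: "\<And>z. {u,z} \<in> snd ?T \<Longrightarrow> take k z \<noteq> u \<Longrightarrow> z = p1"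
    using CT \<open>take k u = u\<close> unfolding cutp_def by blast
  have "take k x = u"
  proof (rule ccontr)
    assume "take k x \<noteq> u" then have "x = p1" using cc ex(1) by blast
    then show False using lx p1l assms(1) by simp
  qed
  moreover have "take k y = u"
  proof (rule ccontr)
    assume "take k y \<noteq> u" then have "y = p1" using cc ex(2) by blast
    then show False using lx p1l assms(1) by simp
  qed
  ultimately have "take k x = u" "take k y = u" by auto
  then show False using dif by simp
qed

lemma simP: assumes "k \<le> m" "cutp k u p1 (GG xi de mu m)" "simrel xi de mu (GG xi de mu m) m a b"
  shows "(take k a = u) = (take k b = u)"
proof -
  let ?R = "\<lambda>x y. msim xi de mu (GG xi de mu m) m x y \<or> msim xi de mu (GG xi de mu m) m y x"
  have "?R\<^sup>*\<^sup>* a b" using assms(3) by (simp add: simrel_def)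
  then show ?thesis
  proof (induction rule: rtranclp_induct)
    case base then show ?case by simp
  next
    case (step y z)
    have "(take k y = u) = (take k z = u)"
      using step(2) msimP[OF assms(1,2)] unfolding msim_def by metis
    then show ?case using step(3) by simp
  qed
qed

lemma cut_step: assumes "k \<le> m" "cutp k u p1 (GG xi de mu m)" shows "cutp k u p1 (GG xi de mu (Suc m))"
  unfolding cutp_def
proof (intro allI impI)
  let ?G = "GG xi de mu m"
  fix a b assume e: "{a,b} \<in> snd (GG xi de mu (Suc m))" and pa: "take k a = u" and pb: "take k b \<noteq> u"
  from e have "{a,b} \<in> snd ?G \<or> (\<exists>v i. v \<in> lvl ?G m \<and> i \<in> Cset xi de ?G v \<and> {a,b} = {v, piF xi de mu ?G m (v@[i])})"
    by (auto simp: step_snd)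
  then show "a = u \<and> b = p1"
  proof
    assume "{a,b} \<in> snd ?G" then show ?thesis using assms(2) pa pb unfolding cutp_def by blast
  next
    assume "\<exists>v i. v \<in> lvl ?G m \<and> i \<in> Cset xi de ?G v \<and> {a,b} = {v, piF xi de mu ?G m (v@[i])}"
    then obtain v i where v: "v \<in> lvl ?G m" "i \<in> Cset xi de ?G v" "{a,b} = {v, piF xi de mu ?G m (v@[i])}" by blast
    have t: "v@[i] \<in> tI xi de ?G m" using v by (auto simp: tI_def lvl_def tG_fst ulam_def Cset_def)
    have "simrel xi de mu ?G m (v@[i]) (piF xi de mu ?G m (v@[i]))" using piF_in[OF GG_fin t] by blast
    then have "(take k (v@[i]) = u) = (take k (piF xi de mu ?G m (v@[i])) = u)" using simP[OF assms] by blast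
    moreover have "length v = m" using v by (simp add: lvl_def ulam_def)
    ultimately have "(take k v = u) = (take k (piF xi de mu ?G m (v@[i])) = u)" using assms(1) by simp
    then show ?thesis using v(3) pa pb by (auto simp: doubleton_eq_iff)
  qed
qed

lemma cut_all: "cutp k u p1 (GG xi de mu (k + n))"
proof (induction n)
  case 0 then show ?case using cut0 by simp
next
  case (Suc n) then show ?case using cut_step[of "k+n"] by simp
qed

lemma up_walk: assumes "x \<in> fst (GG xi de mu M)" "take k x = u" "length x = k + j" "cutp k u p1 (GG xi de mu M)"
  shows "\<exists>xs. walk (GG xi de mu M) xs \<and> hd xs = u \<and> last xs = x \<and> length xs = Suc j"
  using assms(1-3)
proof (induction j arbitrary: x)
  case 0
  then have "x = u" using u_len by (metis add_0_right order_refl take_all)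
  then show ?case using 0 by (intro exI[of _ "[u]"]) (simp add: walk_single)
next
  case (Suc j)
  have "1 \<le> length x" using Suc.prems by simp
  from GG_parent[OF Suc.prems(1) this] obtain y where y: "{y,x} \<in> snd (GG xi de mu M)" "Suc (length y) = length x" by blast
  have y_in: "y \<in> fst (GG xi de mu M)" using edge_in[OF y(1)] by blast
  have ly: "length y = k + j" using y(2) Suc.prems(3) by simp
  have xne: "x \<noteq> u" using Suc.prems(3) u_len by auto
  have py: "take k y = u"
  proof (rule ccontr)
    assume "take k y \<noteq> u"
    moreover have "{x,y} \<in> snd (GG xi de mu M)" using y(1) by (simp add: insert_commute)
    ultimately have "x = u" using assms(4) Suc.prems(2) unfolding cutp_def by blast
    then show False using xne by simp
  qed
  from Suc.IH[OF y_in py ly] obtain xs where xs: "walk (GG xi de mu M) xs" "hd xs = u" "last xs = y" "length xs = Suc j" by blast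
  have "walk (GG xi de mu M) (xs @ [x])" using walk_snoc[OF xs(1)] xs(3) y(1) Suc.prems(1) by simp
  moreover have "hd (xs @ [x]) = u" using xs by (cases xs) auto
  ultimately show ?case using xs by (intro exI[of _ "xs @ [x]"]) simp
qed

lemma dist_P: assumes "v \<in> fst (GG xi de mu (k+n))" "length v = k + n"
  shows "(gdist (GG xi de mu (k+n)) u v = enat n) = (take k v = u)"
proof
  let ?G = "GG xi de mu (k+n)"
  assume "gdist ?G u v = enat n"
  from gdist_ex[OF this] obtain xs where xs: "walk ?G xs" "hd xs = u" "last xs = v" "length xs = Suc n" by blast
  show "take k v = u"
  proof (rule ccontr)
    assume "take k v \<noteq> u"
    moreover have "take k u = u" using u_len by simp
    ultimately have "p1 \<in> set xs" using crossing[OF xs(1) cut_all] xs(2,3) by auto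
    then obtain t where t: "t < Suc n" "xs!t = p1" using xs(4) by (auto simp: in_set_conv_nth)
    have xne: "xs \<noteq> []" using xs(4) by auto
    have "xs!n = v" using xs(3,4) last_conv_nth[OF xne] by simp
    then have "\<bar>int (length (xs!t)) - int (length v)\<bar> \<le> \<bar>int t - int n\<bar>"
      using walk_lev[OF xs(1) EdgeLev_GG, of t n] t xs(4) by simp
    then show False using t(2) p1l assms(2) t(1) by simp
  qed
next
  let ?G = "GG xi de mu (k+n)"
  assume "take k v = u"
  from up_walk[OF assms(1) this assms(2) cut_all] obtain xs where
    xs: "walk ?G xs" "hd xs = u" "last xs = v" "length xs = Suc n" by blast
  have "gdist ?G u v \<le> enat n" using gdist_le[OF xs(1-3)] xs(4) by simp
  moreover have "enat (nat \<bar>int (length u) - int (length v)\<bar>) \<le> gdist ?G u v" using gdist_lev[OF EdgeLev_GG] .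
  then have "enat n \<le> gdist ?G u v" using u_len assms(2) by simp
  ultimately show "gdist ?G u v = enat n" by simp
qed

lemma Iu_char: "Iu xi de mu k u n = {v \<in> In xi de mu (k+n). take k v = u}"
proof -
  have "u \<in> alpha xi de mu (k+n) v = (take k v = u)" if v: "v \<in> In xi de mu (k+n)" for v
  proof -
    have v1: "v \<in> fst (GG xi de mu (k+n))" "length v = k + n" using v by (auto simp: In_def lvl_def ulam_def)
    have "u \<in> alpha xi de mu (k+n) v \<longleftrightarrow> gdist (GG xi de mu (k+n)) u v = enat n"
    proof
      assume "u \<in> alpha xi de mu (k+n) v"
      then obtain j where j: "j \<le> k+n" "u \<in> In xi de mu (k+n-j)" "gdist (GG xi de mu (k+n)) u v = enat j"
        unfolding alpha_def by auto
      then have "length u = k+n-j" by (simp add: In_def lvl_def ulam_def)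
      then have "j = n" using u_len j(1) by simp
      then show "gdist (GG xi de mu (k+n)) u v = enat n" using j by simp
    next
      assume "gdist (GG xi de mu (k+n)) u v = enat n"
      moreover have "u \<in> In xi de mu (k+n-n)" using uI by simp
      ultimately show "u \<in> alpha xi de mu (k+n) v" unfolding alpha_def by (intro UN_I[of n]) auto
    qed
    then show ?thesis using dist_P[OF v1] by simp
  qed
  then show ?thesis unfolding Iu_def by blast
qed

end


theorem lemma4p1:
  fixes xi :: "label \<Rightarrow> nat" and de :: "label \<Rightarrow> label \<Rightarrow> bool" and mu :: "label set \<Rightarrow> bool"
    and k :: nat and u :: label
  assumes "k \<ge> 3" and "u \<in> In xi de mu k" and "renewed xi de mu k u"
  shows "(\<forall>n\<ge>1. \<forall>v\<in>Iu xi de mu k u n.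
            sigma xi de mu (k + n) v \<subseteq> tIu xi de mu k u n \<and>
            (\<forall>i\<le>n. alpha_i xi de mu (k + n) i v \<subseteq> Iu xi de mu k u (n - i)))
       \<and> (\<forall>n. Iu xi de mu k u n \<subseteq> Uu u n)
       \<and> (\<forall>m\<ge>k. \<forall>v\<in>Vu xi de mu k u (m - k). \<forall>v'\<in>Vn xi de mu m - Vu xi de mu k u (m - k).
            \<forall>xs. gpath (GG xi de mu m) xs \<and> hd xs = v \<and> last xs = v' \<longrightarrow> u \<in> set xs)"
proof -
  note k3 = assms(1) and uI = assms(2) and ren = assms(3)
  have ul: "length u = k" and u_in: "u \<in> fst (GG xi de mu k)" using uI by (auto simp: In_def lvl_def ulam_def)
  have "1 \<le> length u" using ul k3 by simp
  from GG_parent[OF u_in this] obtain p1 where p1: "{p1,u} \<in> snd (GG xi de mu k)" "Suc (length p1) = k"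
    using ul by auto
  note ctx = k3 uI ren p1
  have IuC: "\<And>n. Iu xi de mu k u n = {v \<in> In xi de mu (k+n). take k v = u}" using Iu_char[OF ctx] .
  have cutA: "\<And>n. cutp k u p1 (GG xi de mu (k + n))" using cut_all[OF ctx] .
  have ET: "\<And>m. EdgeLev (GG xi de mu m)" using EdgeLev_GG .
  have part1: "sigma xi de mu (k + n) v \<subseteq> tIu xi de mu k u n \<and>
            (\<forall>i\<le>n. alpha_i xi de mu (k + n) i v \<subseteq> Iu xi de mu k u (n - i))"
    if n: "1 \<le> n" and v: "v \<in> Iu xi de mu k u n" for n v
  proof
    have Pv: "take k v = u" and vI: "v \<in> In xi de mu (k+n)" using v IuC by auto
    show "sigma xi de mu (k + n) v \<subseteq> tIu xi de mu k u n"
    proof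
      fix vt assume vt: "vt \<in> sigma xi de mu (k + n) v"
      let ?m = "k + (n - 1)"
      have mm: "k + n - 1 = ?m" using n by simp
      have vt1: "vt \<in> tI xi de (GG xi de mu ?m) ?m" "simrel xi de mu (GG xi de mu ?m) ?m vt v"
        using vt unfolding sigma_def tildeI_def simn_def mm by auto
      have "(take k vt = u) = (take k v = u)" using simP[OF ctx _ cutA vt1(2)] by simp
      then have Pvt: "take k vt = u" using Pv by simp
      obtain w i where wi: "vt = w@[i]" "w \<in> lvl (GG xi de mu ?m) ?m" "i \<in> Cset xi de (GG xi de mu ?m) w"
        using tI_dec[OF vt1(1)] GG_lev by blast
      have lw: "length w = ?m" using wi(2) by (simp add: lvl_def ulam_def)
      then have "take k w = u" using Pvt wi(1) by simp
      moreover have "w \<in> In xi de mu ?m" using wi(2) by (simp add: In_def)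
      ultimately have "w \<in> Iu xi de mu k u (n - 1)" using IuC by simp
      moreover have "w@[i] \<in> tildeI xi de mu (k + n)" using vt wi(1) unfolding sigma_def by simp
      ultimately show "vt \<in> tIu xi de mu k u n" unfolding tIu_def using wi(1) by blast
    qed
    show "\<forall>i\<le>n. alpha_i xi de mu (k + n) i v \<subseteq> Iu xi de mu k u (n - i)"
    proof (intro allI impI subsetI)
      fix i x assume i: "i \<le> n" and x: "x \<in> alpha_i xi de mu (k + n) i v"
      have xI: "x \<in> In xi de mu (k + n - i)" using x by (simp add: alpha_i_def)
      then have lx: "length x = k + n - i" by (simp add: In_def lvl_def ulam_def)
      from x obtain j where j: "j \<le> k + n" "x \<in> In xi de mu (k+n-j)" "gdist (GG xi de mu (k+n)) x v = enat j"
        unfolding alpha_i_def alpha_def by auto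
      have "length x = k + n - j" using j(2) by (simp add: In_def lvl_def ulam_def)
      then have ji: "j = i" using lx i j(1) by simp
      from gdist_ex[OF j(3)] obtain xs where xs: "walk (GG xi de mu (k+n)) xs" "hd xs = x" "last xs = v" "length xs = Suc j" by blast
      have Px: "take k x = u"
      proof (rule ccontr)
        assume "take k x \<noteq> u"
        then have "p1 \<in> set xs" using crossing[OF xs(1) cutA] xs(2,3) Pv by auto
        then obtain t where t: "t < Suc j" "xs!t = p1" using xs(4) by (auto simp: in_set_conv_nth)
        have xne: "xs \<noteq> []" using xs(4) by auto
        have "xs!j = v" using xs(3,4) last_conv_nth[OF xne] by simp
        moreover have "length v = k + n" using vI by (simp add: In_def lvl_def ulam_def)
        ultimately have "\<bar>int (length (xs!t)) - int (k + n)\<bar> \<le> \<bar>int t - int j\<bar>"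
          using walk_lev[OF xs(1) ET, of t j] t xs(4) by simp
        then show False using t p1(2) ji i by simp
      qed
      have "x \<in> In xi de mu (k + (n - i))" using xI i by (simp add: add_diff_assoc)
      then show "x \<in> Iu xi de mu k u (n - i)" using IuC Px by simp
    qed
  qed
  have part2: "Iu xi de mu k u n \<subseteq> Uu u n" for n
  proof
    fix v assume "v \<in> Iu xi de mu k u n"
    then have Pv: "take k v = u" and vI: "v \<in> ulam (k+n)" using IuC by (auto simp: In_def lvl_def)
    have "v = u @ drop k v" using Pv by (metis append_take_drop_id)
    moreover have "drop k v \<in> ulam n" using vI by (auto simp: ulam_def dest: in_set_dropD)
    ultimately show "v \<in> Uu u n" unfolding Uu_def by blast
  qed
  have part3: "u \<in> set xs"
    if m: "k \<le> m" and v: "v \<in> Vu xi de mu k u (m - k)" and v': "v' \<in> Vn xi de mu m - Vu xi de mu k u (m - k)"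
      and xs: "gpath (GG xi de mu m) xs" "hd xs = v" "last xs = v'" for m v v' xs
  proof -
    have mk: "k + (m - k) = m" using m by simp
    obtain j where j: "j \<le> m - k" "v \<in> Iu xi de mu k u j" using v unfolding Vu_def by auto
    have Pv: "take k v = u" using j(2) IuC by auto
    have v'G: "v' \<in> fst (GG xi de mu m)" using v' by (simp add: Vn_def)
    have Pv': "take k v' \<noteq> u"
    proof
      assume P: "take k v' = u"
      have l: "length v' \<le> m" "v' \<in> ulam (length v')" using GG_lev[OF v'G] by auto
      have "k \<le> length v'" using P ul by (metis length_take min.bounded_iff order_refl)
      then have lk: "k + (length v' - k) = length v'" by simp
      have "v' \<in> fst (GG xi de mu (length v'))" using GG_stab[OF v'G] .
      then have "v' \<in> In xi de mu (k + (length v' - k))" using l(2) lk by (simp add: In_def lvl_def)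
      then have "v' \<in> Iu xi de mu k u (length v' - k)" using IuC P by simp
      moreover have "length v' - k \<le> m - k" using l(1) by simp
      ultimately have "v' \<in> Vu xi de mu k u (m - k)" unfolding Vu_def by auto
      then show False using v' by simp
    qed
    have w: "walk (GG xi de mu m) xs" using xs(1) by (simp add: gpath_def)
    have "cutp k u p1 (GG xi de mu m)" using cutA[of "m - k"] mk by simp
    then show ?thesis using crossing[OF w] xs(2,3) Pv Pv' by auto
  qed
  have A: "\<forall>n\<ge>1. \<forall>v\<in>Iu xi de mu k u n.
            sigma xi de mu (k + n) v \<subseteq> tIu xi de mu k u n \<and>
            (\<forall>i\<le>n. alpha_i xi de mu (k + n) i v \<subseteq> Iu xi de mu k u (n - i))"
  proof (intro allI impI ballI)
    fix n v assume "1 \<le> n" "v \<in> Iu xi de mu k u n"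
    then show "sigma xi de mu (k + n) v \<subseteq> tIu xi de mu k u n \<and>
            (\<forall>i\<le>n. alpha_i xi de mu (k + n) i v \<subseteq> Iu xi de mu k u (n - i))" by (rule part1)
  qed
  have B: "\<forall>n. Iu xi de mu k u n \<subseteq> Uu u n" using part2 by blast
  have C: "\<forall>m\<ge>k. \<forall>v\<in>Vu xi de mu k u (m - k). \<forall>v'\<in>Vn xi de mu m - Vu xi de mu k u (m - k).
            \<forall>xs. gpath (GG xi de mu m) xs \<and> hd xs = v \<and> last xs = v' \<longrightarrow> u \<in> set xs"
  proof (intro allI impI ballI)
    fix m v v' xs assume h: "k \<le> m" "v \<in> Vu xi de mu k u (m - k)" "v' \<in> Vn xi de mu m - Vu xi de mu k u (m - k)"
      "gpath (GG xi de mu m) xs \<and> hd xs = v \<and> last xs = v'"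
    from h(4) have "gpath (GG xi de mu m) xs" "hd xs = v" "last xs = v'" by auto
    from part3[OF h(1,2,3) this] show "u \<in> set xs" .
  qed
  from A B C show ?thesis by (intro conjI)
qed

end
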